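(* Let $X$ be an $n$-skeletal simplicial set. Then $\text{St}(X)$ (i.e. its underlying simplicial set) is $(n+1)$-coskeletal.
   Context: A simplicial $T$-complex is a simplicial set with marked ("thin") simplices such that degenerate simplices are thin, every horn $\Lambda^n_k\to X$ has a unique filler with thin top simplex, and if all nondegenerate faces of a horn are thin then its composition (the $k$-th face of that filler) is thin; morphisms are thin-preserving simplicial maps. $\text{St}:\text{sSet}\to\text{sTCom}$ is the left adjoint of the forgetful functor $\text{U}_{\text{St}}$ from simplicial $T$-complexes to simplicial sets. *)

theory Defs
  imports Main
begin

(* A simplicial set, presented by graded carriers with face and degeneracy maps.
   sx X m        : the set of m-simplices
   fc X n i      : the face map d_i : X_(n+1) -> X_n   (i <= n+1)
   dg X n i      : the degeneracy s_i : X_n -> X_(n+1) (i <= n)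
   Values of fc/dg outside the carriers are irrelevant. *)
record 'a sset =
  sx :: "nat \<Rightarrow> 'a set"
  fc :: "nat \<Rightarrow> nat \<Rightarrow> 'a \<Rightarrow> 'a"
  dg :: "nat \<Rightarrow> nat \<Rightarrow> 'a \<Rightarrow> 'a"

definition is_sset :: "'a sset \<Rightarrow> bool" where
  "is_sset X \<longleftrightarrow>
     (\<forall>n i x. i \<le> Suc n \<and> x \<in> sx X (Suc n) \<longrightarrow> fc X n i x \<in> sx X n) \<and>
     (\<forall>n i x. i \<le> n \<and> x \<in> sx X n \<longrightarrow> dg X n i x \<in> sx X (Suc n)) \<and>
     \<comment> \<open>d_i d_j = d_(j-1) d_i for i < j\<close>
     (\<forall>n i j x. i < j \<and> j \<le> Suc (Suc n) \<and> x \<in> sx X (Suc (Suc n)) \<longrightarrow>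
        fc X n i (fc X (Suc n) j x) = fc X n (j - 1) (fc X (Suc n) i x)) \<and>
     \<comment> \<open>s_i s_j = s_(j+1) s_i for i <= j\<close>
     (\<forall>n i j x. i \<le> j \<and> j \<le> n \<and> x \<in> sx X n \<longrightarrow>
        dg X (Suc n) i (dg X n j x) = dg X (Suc n) (Suc j) (dg X n i x)) \<and>
     \<comment> \<open>d_i s_j = s_(j-1) d_i for i < j\<close>
     (\<forall>n i j x. i < j \<and> j \<le> Suc n \<and> x \<in> sx X (Suc n) \<longrightarrow>
        fc X (Suc n) i (dg X (Suc n) j x) = dg X n (j - 1) (fc X n i x)) \<and>
     \<comment> \<open>d_j s_j = d_(j+1) s_j = id\<close>
     (\<forall>n j x. j \<le> n \<and> x \<in> sx X n \<longrightarrow>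
        fc X n j (dg X n j x) = x \<and> fc X n (Suc j) (dg X n j x) = x) \<and>
     \<comment> \<open>d_i s_j = s_j d_(i-1) for i > j+1\<close>
     (\<forall>n i j x. Suc j < i \<and> i \<le> Suc (Suc n) \<and> x \<in> sx X (Suc n) \<longrightarrow>
        fc X (Suc n) i (dg X (Suc n) j x) = dg X n j (fc X n (i - 1) x))"

definition is_smap :: "'a sset \<Rightarrow> 'b sset \<Rightarrow> (nat \<Rightarrow> 'a \<Rightarrow> 'b) \<Rightarrow> bool" where
  "is_smap X Y f \<longleftrightarrow>
     (\<forall>m. \<forall>x\<in>sx X m. f m x \<in> sx Y m) \<and>
     (\<forall>n i x. i \<le> Suc n \<and> x \<in> sx X (Suc n) \<longrightarrow> f n (fc X n i x) = fc Y n i (f (Suc n) x)) \<and>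
     (\<forall>n i x. i \<le> n \<and> x \<in> sx X n \<longrightarrow> f (Suc n) (dg X n i x) = dg Y n i (f n x))"

definition degenerate :: "'a sset \<Rightarrow> nat \<Rightarrow> 'a \<Rightarrow> bool" where
  "degenerate X m x \<longleftrightarrow> (\<exists>p i y. m = Suc p \<and> i \<le> p \<and> y \<in> sx X p \<and> x = dg X p i y)"

(* With
   I = {0..n+1} - {k} this is a horn \<Lambda>^(n+1)_k \<rightarrow> X, with I = {0..n+1}
   a map \<partial>\<Delta>^(n+1) \<rightarrow> X.  (For n = 0 there is no compatibility condition.) *)
definition face_family :: "'a sset \<Rightarrow> nat \<Rightarrow> nat set \<Rightarrow> (nat \<Rightarrow> 'a) \<Rightarrow> bool" where
  "face_family X n I y \<longleftrightarrow>
     (\<forall>i\<in>I. y i \<in> sx X n) \<and>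
     (0 < n \<longrightarrow> (\<forall>i\<in>I. \<forall>j\<in>I. i < j \<longrightarrow> fc X (n - 1) i (y j) = fc X (n - 1) (j - 1) (y i)))"

definition is_filler :: "'a sset \<Rightarrow> nat \<Rightarrow> nat set \<Rightarrow> (nat \<Rightarrow> 'a) \<Rightarrow> 'a \<Rightarrow> bool" where
  "is_filler X n I y x \<longleftrightarrow> x \<in> sx X (Suc n) \<and> (\<forall>i\<in>I. fc X n i x = y i)"

definition horn_idx :: "nat \<Rightarrow> nat \<Rightarrow> nat set" where
  "horn_idx n k = {0..Suc n} - {k}"

definition skeletal :: "'a sset \<Rightarrow> nat \<Rightarrow> bool" where
  "skeletal X n \<longleftrightarrow> (\<forall>m. n < m \<longrightarrow> (\<forall>x\<in>sx X m. degenerate X m x))"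

definition coskeletal :: "'a sset \<Rightarrow> nat \<Rightarrow> bool" where
  "coskeletal X n \<longleftrightarrow>
     (\<forall>m y. n < Suc m \<and> face_family X m {0..Suc m} y \<longrightarrow>
        (\<exists>!x. is_filler X m {0..Suc m} y x))"

definition tcomplex :: "'a sset \<Rightarrow> (nat \<Rightarrow> 'a set) \<Rightarrow> bool" where
  "tcomplex X T \<longleftrightarrow>
     is_sset X \<and>
     (\<forall>m. T m \<subseteq> sx X m) \<and>
     (\<forall>m x. x \<in> sx X m \<and> degenerate X m x \<longrightarrow> x \<in> T m) \<and>
     (\<forall>n k y. k \<le> Suc n \<and> face_family X n (horn_idx n k) y \<longrightarrow>
        (\<exists>!x. x \<in> T (Suc n) \<and> is_filler X n (horn_idx n k) y x)) \<and>
     (\<forall>n k y x. k \<le> Suc n \<and> face_family X n (horn_idx n k) y \<and>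
        x \<in> T (Suc n) \<and> is_filler X n (horn_idx n k) y x \<and>
        (\<forall>i\<in>horn_idx n k. \<not> degenerate X n (y i) \<longrightarrow> y i \<in> T n) \<longrightarrow>
        fc X n k x \<in> T n)"

definition is_tmap :: "'a sset \<Rightarrow> (nat \<Rightarrow> 'a set) \<Rightarrow> 'b sset \<Rightarrow> (nat \<Rightarrow> 'b set) \<Rightarrow>
    (nat \<Rightarrow> 'a \<Rightarrow> 'b) \<Rightarrow> bool" where
  "is_tmap X TX Y TY f \<longleftrightarrow> is_smap X Y f \<and> (\<forall>m. \<forall>x\<in>TX m. f m x \<in> TY m)"

(* (S, T) together with the unit \<eta> : X \<rightarrow> U(S,T) is St(X), i.e. \<eta> is universal:
   every simplicial map X \<rightarrow> U(Y) into a T-complex factors uniquely through \<eta>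
   by a T-complex morphism.  The universal property is quantified over all
   T-complexes whose simplices live in the same type 'c as those of S. *)
definition is_St :: "'a sset \<Rightarrow> 'c sset \<Rightarrow> (nat \<Rightarrow> 'c set) \<Rightarrow> (nat \<Rightarrow> 'a \<Rightarrow> 'c) \<Rightarrow> bool" where
  "is_St X S T \<eta> \<longleftrightarrow>
     tcomplex S T \<and> is_smap X S \<eta> \<and>
     (\<forall>(Y :: 'c sset) TY f. tcomplex Y TY \<and> is_smap X Y f \<longrightarrow>
        (\<exists>g. is_tmap S T Y TY g \<and> (\<forall>m. \<forall>x\<in>sx X m. g m (\<eta> m x) = f m x) \<and>
             (\<forall>g'. is_tmap S T Y TY g' \<and> (\<forall>m. \<forall>x\<in>sx X m. g' m (\<eta> m x) = f m x) \<longrightarrow>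
                   (\<forall>m. \<forall>z\<in>sx S m. g' m z = g m z))))"

end

theory Submission
  imports Defs
begin

lemma sset_fc: "is_sset X \<Longrightarrow> i \<le> Suc n \<Longrightarrow> x \<in> sx X (Suc n) \<Longrightarrow> fc X n i x \<in> sx X n"
proof -
  assume a: "is_sset X" "i \<le> Suc n" "x \<in> sx X (Suc n)"
  have "\<forall>n i x. i \<le> Suc n \<and> x \<in> sx X (Suc n) \<longrightarrow> fc X n i x \<in> sx X n"
    using a(1) unfolding is_sset_def by (elim conjE) assumption
  then show ?thesis using a(2-) by blast
qed
lemma sset_dg: "is_sset X \<Longrightarrow> i \<le> n \<Longrightarrow> x \<in> sx X n \<Longrightarrow> dg X n i x \<in> sx X (Suc n)"
proof -
  assume a: "is_sset X" "i \<le> n" "x \<in> sx X n"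
  have "\<forall>n i x. i \<le> n \<and> x \<in> sx X n \<longrightarrow> dg X n i x \<in> sx X (Suc n)"
    using a(1) unfolding is_sset_def by (elim conjE) assumption
  then show ?thesis using a(2-) by blast
qed
lemma sset_ff: "is_sset X \<Longrightarrow> i < j \<Longrightarrow> j \<le> Suc (Suc n) \<Longrightarrow> x \<in> sx X (Suc (Suc n)) \<Longrightarrow>
   fc X n i (fc X (Suc n) j x) = fc X n (j - 1) (fc X (Suc n) i x)"
proof -
  assume a: "is_sset X" "i < j" "j \<le> Suc (Suc n)" "x \<in> sx X (Suc (Suc n))"
  have "\<forall>n i j x. i < j \<and> j \<le> Suc (Suc n) \<and> x \<in> sx X (Suc (Suc n)) \<longrightarrow>
        fc X n i (fc X (Suc n) j x) = fc X n (j - 1) (fc X (Suc n) i x)"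
    using a(1) unfolding is_sset_def by (elim conjE) assumption
  then show ?thesis using a(2-) by blast
qed
lemma sset_dd: "is_sset X \<Longrightarrow> i \<le> j \<Longrightarrow> j \<le> n \<Longrightarrow> x \<in> sx X n \<Longrightarrow>
        dg X (Suc n) i (dg X n j x) = dg X (Suc n) (Suc j) (dg X n i x)"
proof -
  assume a: "is_sset X" "i \<le> j" "j \<le> n" "x \<in> sx X n"
  have "\<forall>n i j x. i \<le> j \<and> j \<le> n \<and> x \<in> sx X n \<longrightarrow>
        dg X (Suc n) i (dg X n j x) = dg X (Suc n) (Suc j) (dg X n i x)"
    using a(1) unfolding is_sset_def by (elim conjE) assumption
  then show ?thesis using a(2-) by blast
qed
lemma sset_fd_lt: "is_sset X \<Longrightarrow> i < j \<Longrightarrow> j \<le> Suc n \<Longrightarrow> x \<in> sx X (Suc n) \<Longrightarrow>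
   fc X (Suc n) i (dg X (Suc n) j x) = dg X n (j - 1) (fc X n i x)"
proof -
  assume a: "is_sset X" "i < j" "j \<le> Suc n" "x \<in> sx X (Suc n)"
  have "\<forall>n i j x. i < j \<and> j \<le> Suc n \<and> x \<in> sx X (Suc n) \<longrightarrow>
        fc X (Suc n) i (dg X (Suc n) j x) = dg X n (j - 1) (fc X n i x)"
    using a(1) unfolding is_sset_def by (elim conjE) assumption
  then show ?thesis using a(2-) by blast
qed
lemma sset_fd_eq: "is_sset X \<Longrightarrow> j \<le> n \<Longrightarrow> x \<in> sx X n \<Longrightarrow>
   fc X n j (dg X n j x) = x \<and> fc X n (Suc j) (dg X n j x) = x"
proof -
  assume a: "is_sset X" "j \<le> n" "x \<in> sx X n"
  have "\<forall>n j x. j \<le> n \<and> x \<in> sx X n \<longrightarrow>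
        fc X n j (dg X n j x) = x \<and> fc X n (Suc j) (dg X n j x) = x"
    using a(1) unfolding is_sset_def by (elim conjE) assumption
  then show ?thesis using a(2-) by blast
qed
lemma sset_fd_gt: "is_sset X \<Longrightarrow> Suc j < i \<Longrightarrow> i \<le> Suc (Suc n) \<Longrightarrow> x \<in> sx X (Suc n) \<Longrightarrow>
   fc X (Suc n) i (dg X (Suc n) j x) = dg X n j (fc X n (i - 1) x)"
proof -
  assume a: "is_sset X" "Suc j < i" "i \<le> Suc (Suc n)" "x \<in> sx X (Suc n)"
  have "\<forall>n i j x. Suc j < i \<and> i \<le> Suc (Suc n) \<and> x \<in> sx X (Suc n) \<longrightarrow>
        fc X (Suc n) i (dg X (Suc n) j x) = dg X n j (fc X n (i - 1) x)"
    using a(1) unfolding is_sset_def by (elim conjE) assumption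
  then show ?thesis using a(2-) by blast
qed

primrec Pc :: "'c sset \<Rightarrow> (nat \<Rightarrow> 'c set) \<Rightarrow> nat \<Rightarrow> nat \<Rightarrow> 'c set" where
  "Pc S T n 0 = sx S 0"
| "Pc S T n (Suc m) = {x \<in> sx S (Suc m). (n < Suc m \<longrightarrow> x \<in> T (Suc m)) \<and>
      (\<forall>i \<le> Suc m. fc S m i x \<in> Pc S T n m)}"

lemma Pc_sub: "Pc S T n m \<subseteq> sx S m"
  by (cases m) auto

lemma Pc_low: "is_sset S \<Longrightarrow> m \<le> n \<Longrightarrow> Pc S T n m = sx S m"
proof (induction m)
  case 0 then show ?case by simp
next
  case (Suc m) then show ?case using sset_fc[of S] by auto
qed

lemma Pc_thin: "n < m \<Longrightarrow> Pc S T n m \<subseteq> T m"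
  by (cases m) auto

lemma Pc_face: "x \<in> Pc S T n (Suc m) \<Longrightarrow> i \<le> Suc m \<Longrightarrow> fc S m i x \<in> Pc S T n m"
  by auto

lemma tc_sset: "tcomplex S T \<Longrightarrow> is_sset S" unfolding tcomplex_def by (rule conjunct1)
lemma tc_deg: "tcomplex S T \<Longrightarrow> x \<in> sx S m \<Longrightarrow> degenerate S m x \<Longrightarrow> x \<in> T m"
proof -
  assume a: "tcomplex S T" "x \<in> sx S m" "degenerate S m x"
  have "\<forall>m x. x \<in> sx S m \<and> degenerate S m x \<longrightarrow> x \<in> T m"
    using a(1) unfolding tcomplex_def by (elim conjE) assumption
  then show ?thesis using a(2-) by blast
qed

lemma Pc_dg: assumes tc: "tcomplex S T"
  shows "\<forall>z j. z \<in> Pc S T n m \<longrightarrow> j \<le> m \<longrightarrow> dg S m j z \<in> Pc S T n (Suc m)"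
proof (induction m)
  case 0
  have ss: "is_sset S" using tc tc_sset by blast
  show ?case
  proof (intro allI impI)
    fix z j assume z: "z \<in> Pc S T n 0" and j: "j \<le> (0::nat)"
    have zs: "z \<in> sx S 0" using z by simp
    have d: "dg S 0 j z \<in> sx S (Suc 0)" using sset_dg[OF ss j zs] .
    have dgn: "degenerate S (Suc 0) (dg S 0 j z)" unfolding degenerate_def using j zs by blast
    have "\<forall>i \<le> Suc 0. fc S 0 i (dg S 0 j z) \<in> Pc S T n 0"
      using sset_fd_eq[OF ss j zs] j z by (auto simp: le_Suc_eq)
    then show "dg S 0 j z \<in> Pc S T n (Suc 0)" using d tc_deg[OF tc d dgn] by simp
  qed
next
  case (Suc m)
  have ss: "is_sset S" using tc tc_sset by blast
  show ?case
  proof (intro allI impI)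
    fix z j assume z: "z \<in> Pc S T n (Suc m)" and j: "j \<le> Suc m"
    have zs: "z \<in> sx S (Suc m)" using z Pc_sub[of S T n "Suc m"] by blast
    have d: "dg S (Suc m) j z \<in> sx S (Suc (Suc m))" using sset_dg[OF ss j zs] .
    have dgn: "degenerate S (Suc (Suc m)) (dg S (Suc m) j z)" unfolding degenerate_def using j zs by blast
    have "fc S (Suc m) i (dg S (Suc m) j z) \<in> Pc S T n (Suc m)" if i: "i \<le> Suc (Suc m)" for i
    proof -
      consider "i < j" | "i = j" | "i = Suc j" | "Suc j < i" by linarith
      then show ?thesis
      proof cases
        case 1
        have "fc S m i z \<in> Pc S T n m" using Pc_face[OF z] 1 j by simp
        then have "dg S m (j - 1) (fc S m i z) \<in> Pc S T n (Suc m)" using Suc.IH 1 j by auto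
        then show ?thesis using sset_fd_lt[OF ss 1 j zs] by simp
      next
        case 2 then show ?thesis using sset_fd_eq[OF ss j zs] z by simp
      next
        case 3 then show ?thesis using sset_fd_eq[OF ss j zs] z by simp
      next
        case 4
        have "fc S m (i - 1) z \<in> Pc S T n m" using Pc_face[OF z] 4 i by simp
        then have "dg S m j (fc S m (i - 1) z) \<in> Pc S T n (Suc m)" using Suc.IH 4 i by auto
        then show ?thesis using sset_fd_gt[OF ss 4 i zs] by simp
      qed
    qed
    then show "dg S (Suc m) j z \<in> Pc S T n (Suc (Suc m))"
      unfolding Pc.simps(2)[of S T n "Suc m"] using d tc_deg[OF tc d dgn]
      by (simp only: mem_Collect_eq) blast
  qed
qed


lemma smap_in: "is_smap X S f \<Longrightarrow> x \<in> sx X m \<Longrightarrow> f m x \<in> sx S m"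
proof -
  assume a: "is_smap X S f" "x \<in> sx X m"
  have "\<forall>m. \<forall>x\<in>sx X m. f m x \<in> sx S m" using a(1) unfolding is_smap_def by (elim conjE) assumption
  then show ?thesis using a(2) by blast
qed
lemma smap_fc: "is_smap X S f \<Longrightarrow> i \<le> Suc n \<Longrightarrow> x \<in> sx X (Suc n) \<Longrightarrow> f n (fc X n i x) = fc S n i (f (Suc n) x)"
proof -
  assume a: "is_smap X S f" "i \<le> Suc n" "x \<in> sx X (Suc n)"
  have "\<forall>n i x. i \<le> Suc n \<and> x \<in> sx X (Suc n) \<longrightarrow> f n (fc X n i x) = fc S n i (f (Suc n) x)"
    using a(1) unfolding is_smap_def by (elim conjE) assumption
  then show ?thesis using a(2-) by blast
qed
lemma smap_dg: "is_smap X S f \<Longrightarrow> i \<le> n \<Longrightarrow> x \<in> sx X n \<Longrightarrow> f (Suc n) (dg X n i x) = dg S n i (f n x)"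
proof -
  assume a: "is_smap X S f" "i \<le> n" "x \<in> sx X n"
  have "\<forall>n i x. i \<le> n \<and> x \<in> sx X n \<longrightarrow> f (Suc n) (dg X n i x) = dg S n i (f n x)"
    using a(1) unfolding is_smap_def by (elim conjE) assumption
  then show ?thesis using a(2-) by blast
qed

lemma Pc_eta: assumes ssX: "is_sset X" and sk: "skeletal X n" and tc: "tcomplex S T"
  and sm: "is_smap X S \<eta>"
  shows "\<forall>x \<in> sx X m. \<eta> m x \<in> Pc S T n m"
proof (induction m)
  case 0 then show ?case using smap_in[OF sm] by simp
next
  case (Suc m)
  show ?case
  proof
    fix x assume x: "x \<in> sx X (Suc m)"
    have ex: "\<eta> (Suc m) x \<in> sx S (Suc m)" using smap_in[OF sm x] .
    have th: "\<eta> (Suc m) x \<in> T (Suc m)" if nm: "n < Suc m"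
    proof -
      have "degenerate X (Suc m) x" using sk nm x unfolding skeletal_def by blast
      then obtain i y where iy: "i \<le> m" "y \<in> sx X m" "x = dg X m i y"
        unfolding degenerate_def by auto
      have "\<eta> (Suc m) x = dg S m i (\<eta> m y)" using smap_dg[OF sm iy(1,2)] iy(3) by simp
      then have "degenerate S (Suc m) (\<eta> (Suc m) x)"
        unfolding degenerate_def using iy smap_in[OF sm iy(2)] by blast
      then show ?thesis using tc_deg[OF tc ex] by blast
    qed
    have "fc S m i (\<eta> (Suc m) x) \<in> Pc S T n m" if i: "i \<le> Suc m" for i
    proof -
      have "fc X m i x \<in> sx X m" using sset_fc[OF ssX i x] .
      then have "\<eta> m (fc X m i x) \<in> Pc S T n m" using Suc.IH by blast
      then show ?thesis using smap_fc[OF sm i x] by simp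
    qed
    then show "\<eta> (Suc m) x \<in> Pc S T n (Suc m)" using ex th by simp
  qed
qed

lemma sub_sset: assumes tc: "tcomplex S T"
  shows "is_sset (S\<lparr>sx := Pc S T n\<rparr>)"
proof -
  have ss: "is_sset S" using tc_sset[OF tc] .
  have sub: "\<And>m. Pc S T n m \<subseteq> sx S m" by (rule Pc_sub)
  have e1: "sx (S\<lparr>sx := Pc S T n\<rparr>) = Pc S T n" by simp
  have e2: "fc (S\<lparr>sx := Pc S T n\<rparr>) = fc S" by simp
  have e3: "dg (S\<lparr>sx := Pc S T n\<rparr>) = dg S" by simp
  show ?thesis unfolding is_sset_def e1 e2 e3
    apply (intro conjI)
    subgoal by (intro allI impI, elim conjE, rule Pc_face, assumption+)
    subgoal by (intro allI impI, elim conjE, rule Pc_dg[OF tc, rule_format], assumption+)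
    subgoal by (intro allI impI) (elim conjE; rule sset_ff[OF ss]; (assumption | erule subsetD[OF sub]))
    subgoal by (intro allI impI) (elim conjE; rule sset_dd[OF ss]; (assumption | erule subsetD[OF sub]))
    subgoal by (intro allI impI) (elim conjE; rule sset_fd_lt[OF ss]; (assumption | erule subsetD[OF sub]))
    subgoal by (intro allI impI) (elim conjE; rule sset_fd_eq[OF ss]; (assumption | erule subsetD[OF sub]))
    subgoal by (intro allI impI) (elim conjE; rule sset_fd_gt[OF ss]; (assumption | erule subsetD[OF sub]))
    done
qed


lemma tc_horn: "tcomplex S T \<Longrightarrow> k \<le> Suc n \<Longrightarrow> face_family S n (horn_idx n k) y \<Longrightarrow>
    \<exists>!x. x \<in> T (Suc n) \<and> is_filler S n (horn_idx n k) y x"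
proof -
  assume a: "tcomplex S T" "k \<le> Suc n" "face_family S n (horn_idx n k) y"
  have H: "\<forall>n k y. k \<le> Suc n \<and> face_family S n (horn_idx n k) y \<longrightarrow>
        (\<exists>!x. x \<in> T (Suc n) \<and> is_filler S n (horn_idx n k) y x)"
    using a(1) unfolding tcomplex_def by (elim conjE) assumption
  show ?thesis using H[rule_format, OF conjI[OF a(2) a(3)]] .
qed
lemma tc_comp: "tcomplex S T \<Longrightarrow> k \<le> Suc n \<Longrightarrow> face_family S n (horn_idx n k) y \<Longrightarrow>
    x \<in> T (Suc n) \<Longrightarrow> is_filler S n (horn_idx n k) y x \<Longrightarrow>
    (\<forall>i\<in>horn_idx n k. \<not> degenerate S n (y i) \<longrightarrow> y i \<in> T n) \<Longrightarrow> fc S n k x \<in> T n"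
proof -
  assume a: "tcomplex S T" "k \<le> Suc n" "face_family S n (horn_idx n k) y"
    "x \<in> T (Suc n)" "is_filler S n (horn_idx n k) y x"
    "\<forall>i\<in>horn_idx n k. \<not> degenerate S n (y i) \<longrightarrow> y i \<in> T n"
  have H: "\<forall>n k y x. k \<le> Suc n \<and> face_family S n (horn_idx n k) y \<and>
        x \<in> T (Suc n) \<and> is_filler S n (horn_idx n k) y x \<and>
        (\<forall>i\<in>horn_idx n k. \<not> degenerate S n (y i) \<longrightarrow> y i \<in> T n) \<longrightarrow>
        fc S n k x \<in> T n"
    using a(1) unfolding tcomplex_def by (elim conjE) assumption
  show ?thesis using H[rule_format, OF conjI[OF a(2) conjI[OF a(3) conjI[OF a(4) conjI[OF a(5) a(6)]]]]] .
qed
lemma tc_Tsub: "tcomplex S T \<Longrightarrow> T m \<subseteq> sx S m"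
proof -
  assume a: "tcomplex S T"
  have "\<forall>m. T m \<subseteq> sx S m" using a unfolding tcomplex_def by (elim conjE) assumption
  then show ?thesis by blast
qed

lemma horn_P:
  assumes tc: "tcomplex S T" and k: "k \<le> Suc n'"
    and yP: "\<forall>i \<in> horn_idx n' k. y i \<in> Pc S T n n'"
    and ff: "face_family S n' (horn_idx n' k) y"
    and xT: "x \<in> T (Suc n')" and fil: "is_filler S n' (horn_idx n' k) y x"
  shows "x \<in> Pc S T n (Suc n')"
proof -
  have ss: "is_sset S" using tc_sset[OF tc] .
  have xs: "x \<in> sx S (Suc n')" using fil unfolding is_filler_def by blast
  have fy: "\<And>i. i \<in> horn_idx n' k \<Longrightarrow> fc S n' i x = y i" using fil unfolding is_filler_def by blast
  have hi: "\<And>i. i \<le> Suc n' \<Longrightarrow> i \<noteq> k \<Longrightarrow> i \<in> horn_idx n' k" unfolding horn_idx_def by auto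
  have "fc S n' i x \<in> Pc S T n n'" if i: "i \<le> Suc n'" for i
  proof (cases "i = k")
    case False then show ?thesis using fy hi yP i by metis
  next
    case True
    show ?thesis
    proof (cases "n' \<le> n")
      case True then show ?thesis using Pc_low[OF ss] sset_fc[OF ss i xs] by blast
    next
      case False
      then obtain p where p: "n' = Suc p" by (cases n') auto
      have np: "n \<le> p" using False p by simp
      have "\<forall>i\<in>horn_idx n' k. \<not> degenerate S n' (y i) \<longrightarrow> y i \<in> T n'"
        using yP Pc_thin[of n n' S T] False by auto
      then have kT: "fc S n' k x \<in> T n'" using tc_comp[OF tc k ff xT fil] by blast
      have ks: "fc S n' k x \<in> sx S n'" using sset_fc[OF ss k xs] .
      have "fc S p j (fc S (Suc p) k x) \<in> Pc S T n p" if j: "j \<le> Suc p" for j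
      proof (cases "j < k")
        case True
        have "fc S p j (fc S (Suc p) k x) = fc S p (k - 1) (fc S (Suc p) j x)"
          using sset_ff[OF ss True] k xs p by simp
        also have "\<dots> = fc S p (k - 1) (y j)" using fy hi True j p by simp
        finally show ?thesis using Pc_face[of "y j" S T n p "k - 1"] yP hi True j p k by simp
      next
        case False
        have "fc S p k (fc S (Suc p) (Suc j) x) = fc S p j (fc S (Suc p) k x)"
          using sset_ff[of S k "Suc j" p x] ss False j xs p by simp
        moreover have "fc S (Suc p) (Suc j) x = y (Suc j)" using fy hi False j p by simp
        ultimately show ?thesis using Pc_face[of "y (Suc j)" S T n p k] yP hi False j p k by simp
      qed
      then show ?thesis using ks kT p True by simp
    qed
  qed
  then show ?thesis using xs xT by simp
qed

lemma sub_tc: assumes tc: "tcomplex S T"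
  shows "tcomplex (S\<lparr>sx := Pc S T n\<rparr>) (\<lambda>m. T m \<inter> Pc S T n m)"
proof -
  let ?Y = "S\<lparr>sx := Pc S T n\<rparr>"
  have ss: "is_sset S" using tc_sset[OF tc] .
  have sub: "\<And>m. Pc S T n m \<subseteq> sx S m" by (rule Pc_sub)
  have degY: "\<And>m x. degenerate ?Y m x \<Longrightarrow> degenerate S m x"
    using sub unfolding degenerate_def by (simp, blast)
  have ffY: "\<And>n' I y. face_family ?Y n' I y \<Longrightarrow> face_family S n' I y \<and> (\<forall>i\<in>I. y i \<in> Pc S T n n')"
    unfolding face_family_def using sub by auto
  have filY: "\<And>n' I y x. is_filler ?Y n' I y x \<longleftrightarrow> x \<in> Pc S T n (Suc n') \<and> is_filler S n' I y x"
    unfolding is_filler_def using sub by auto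
  have c1: "is_sset ?Y" by (rule sub_sset[OF tc])
  have c2: "\<forall>m. T m \<inter> Pc S T n m \<subseteq> sx ?Y m" by auto
  have c3: "\<forall>m x. x \<in> sx ?Y m \<and> degenerate ?Y m x \<longrightarrow> x \<in> T m \<inter> Pc S T n m"
  proof (intro allI impI)
    fix m x assume a: "x \<in> sx ?Y m \<and> degenerate ?Y m x"
    have xs: "x \<in> sx S m" using a sub by auto
    have "x \<in> T m" using tc_deg[OF tc xs degY] a by blast
    then show "x \<in> T m \<inter> Pc S T n m" using a by simp
  qed
  have c4: "\<forall>n' k y. k \<le> Suc n' \<and> face_family ?Y n' (horn_idx n' k) y \<longrightarrow>
        (\<exists>!x. x \<in> T (Suc n') \<inter> Pc S T n (Suc n') \<and> is_filler ?Y n' (horn_idx n' k) y x)"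
  proof (intro allI impI)
    fix n' k y assume a: "k \<le> Suc n' \<and> face_family ?Y n' (horn_idx n' k) y"
    have ff: "face_family S n' (horn_idx n' k) y" and yP: "\<forall>i\<in>horn_idx n' k. y i \<in> Pc S T n n'"
      using ffY a by auto
    obtain x where x: "x \<in> T (Suc n')" "is_filler S n' (horn_idx n' k) y x"
      and u: "\<And>x'. x' \<in> T (Suc n') \<and> is_filler S n' (horn_idx n' k) y x' \<Longrightarrow> x' = x"
      using tc_horn[OF tc _ ff] a by blast
    have xP: "x \<in> Pc S T n (Suc n')" using horn_P[OF tc _ yP ff x] a by blast
    show "\<exists>!x. x \<in> T (Suc n') \<inter> Pc S T n (Suc n') \<and> is_filler ?Y n' (horn_idx n' k) y x"
    proof (rule ex1I[of _ x])
      have "is_filler ?Y n' (horn_idx n' k) y x" by (rule filY[THEN iffD2], rule conjI[OF xP x(2)])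
      then show "x \<in> T (Suc n') \<inter> Pc S T n (Suc n') \<and> is_filler ?Y n' (horn_idx n' k) y x"
        using x(1) xP by simp
    next
      fix x' assume a': "x' \<in> T (Suc n') \<inter> Pc S T n (Suc n') \<and> is_filler ?Y n' (horn_idx n' k) y x'"
      then have "is_filler ?Y n' (horn_idx n' k) y x'" by (rule conjunct2)
      then have "is_filler S n' (horn_idx n' k) y x'" by (rule filY[THEN iffD1, THEN conjunct2])
      moreover have "x' \<in> T (Suc n')" using a' by simp
      ultimately show "x' = x" using u by blast
    qed
  qed
  have c5: "\<forall>n' k y x. k \<le> Suc n' \<and> face_family ?Y n' (horn_idx n' k) y \<and>
        x \<in> T (Suc n') \<inter> Pc S T n (Suc n') \<and> is_filler ?Y n' (horn_idx n' k) y x \<and>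
        (\<forall>i\<in>horn_idx n' k. \<not> degenerate ?Y n' (y i) \<longrightarrow> y i \<in> T n' \<inter> Pc S T n n') \<longrightarrow>
        fc ?Y n' k x \<in> T n' \<inter> Pc S T n n'"
  proof (intro allI impI, elim conjE)
    fix n' k y x assume k: "k \<le> Suc n'" and ffy: "face_family ?Y n' (horn_idx n' k) y"
      and xT: "x \<in> T (Suc n') \<inter> Pc S T n (Suc n')" and fily: "is_filler ?Y n' (horn_idx n' k) y x"
      and hy: "\<forall>i\<in>horn_idx n' k. \<not> degenerate ?Y n' (y i) \<longrightarrow> y i \<in> T n' \<inter> Pc S T n n'"
    have ff: "face_family S n' (horn_idx n' k) y" using ffY[OF ffy] by (rule conjunct1)
    have fil: "is_filler S n' (horn_idx n' k) y x" using filY fily by blast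
    have h: "\<forall>i\<in>horn_idx n' k. \<not> degenerate S n' (y i) \<longrightarrow> y i \<in> T n'"
    proof (intro ballI impI)
      fix i assume i: "i \<in> horn_idx n' k" and nd: "\<not> degenerate S n' (y i)"
      have "\<not> degenerate ?Y n' (y i)" using nd degY by blast
      then show "y i \<in> T n'" using hy i by blast
    qed
    have x1: "x \<in> T (Suc n')" and x2: "x \<in> Pc S T n (Suc n')" using xT by auto
    have "fc S n' k x \<in> T n'" using tc_comp[OF tc k ff x1 fil h] .
    moreover have "fc S n' k x \<in> Pc S T n n'" using Pc_face[OF x2 k] .
    ultimately show "fc ?Y n' k x \<in> T n' \<inter> Pc S T n n'" by simp
  qed
  show ?thesis unfolding tcomplex_def by (intro conjI c1 c2 c3 c4 c5)
qed


lemma all_P: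
  fixes X :: "'a sset" and S :: "'c sset"
  assumes ssX: "is_sset X" and sk: "skeletal X n" and St: "is_St X S T \<eta>"
    and z: "z \<in> sx S m"
  shows "z \<in> Pc S T n m"
proof -
  let ?Y = "S\<lparr>sx := Pc S T n\<rparr>"
  let ?TY = "\<lambda>m. T m \<inter> Pc S T n m"
  have tc: "tcomplex S T" using St unfolding is_St_def by (rule conjunct1)
  have sm: "is_smap X S \<eta>" using St unfolding is_St_def by (rule conjunct2[THEN conjunct1])
  have U: "\<forall>(Y :: 'c sset) TY f. tcomplex Y TY \<and> is_smap X Y f \<longrightarrow>
        (\<exists>g. is_tmap S T Y TY g \<and> (\<forall>m. \<forall>x\<in>sx X m. g m (\<eta> m x) = f m x) \<and>
             (\<forall>g'. is_tmap S T Y TY g' \<and> (\<forall>m. \<forall>x\<in>sx X m. g' m (\<eta> m x) = f m x) \<longrightarrow>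
                   (\<forall>m. \<forall>z\<in>sx S m. g' m z = g m z)))"
    using St unfolding is_St_def by (elim conjE) assumption
  have tcY: "tcomplex ?Y ?TY" by (rule sub_tc[OF tc])
  have smY: "is_smap X ?Y \<eta>"
    using Pc_eta[OF ssX sk tc sm] sm unfolding is_smap_def by simp
  obtain g where g: "is_tmap S T ?Y ?TY g" and ge: "\<forall>m. \<forall>x\<in>sx X m. g m (\<eta> m x) = \<eta> m x"
    using U[rule_format, OF conjI[OF tcY smY]] by blast
  obtain g0 where g0u: "\<forall>g'. is_tmap S T S T g' \<and> (\<forall>m. \<forall>x\<in>sx X m. g' m (\<eta> m x) = \<eta> m x) \<longrightarrow>
                   (\<forall>m. \<forall>z\<in>sx S m. g' m z = g0 m z)"
    using U[rule_format, OF conjI[OF tc sm]] by blast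
  have e1: "sx ?Y = Pc S T n" by simp
  have e2: "fc ?Y = fc S" by simp
  have e3: "dg ?Y = dg S" by simp
  have gg: "is_smap S ?Y g \<and> (\<forall>m. \<forall>x\<in>T m. g m x \<in> ?TY m)"
    using g unfolding is_tmap_def by assumption
  have gY: "is_smap S ?Y g" using gg by (rule conjunct1)
  have gT: "\<forall>m. \<forall>x\<in>T m. g m x \<in> ?TY m" using gg by (rule conjunct2)
  have g123: "(\<forall>m. \<forall>x\<in>sx S m. g m x \<in> Pc S T n m) \<and>
     (\<forall>n i x. i \<le> Suc n \<and> x \<in> sx S (Suc n) \<longrightarrow> g n (fc S n i x) = fc S n i (g (Suc n) x)) \<and>
     (\<forall>n i x. i \<le> n \<and> x \<in> sx S n \<longrightarrow> g (Suc n) (dg S n i x) = dg S n i (g n x))"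
    using gY unfolding is_smap_def e1 e2 e3 by assumption
  have g1: "\<forall>m. \<forall>x\<in>sx S m. g m x \<in> Pc S T n m" using g123 by (rule conjunct1)
  have g2: "\<forall>n i x. i \<le> Suc n \<and> x \<in> sx S (Suc n) \<longrightarrow> g n (fc S n i x) = fc S n i (g (Suc n) x)"
    using g123 by (rule conjunct2[THEN conjunct1])
  have g3: "\<forall>n i x. i \<le> n \<and> x \<in> sx S n \<longrightarrow> g (Suc n) (dg S n i x) = dg S n i (g n x)"
    using g123 by (rule conjunct2[THEN conjunct2])
  have gS: "is_tmap S T S T g"
    unfolding is_tmap_def is_smap_def
  proof (intro conjI g2 g3)
    show "\<forall>m. \<forall>x\<in>sx S m. g m x \<in> sx S m" using g1 Pc_sub[of S T n] by blast
    show "\<forall>m. \<forall>x\<in>T m. g m x \<in> T m" using gT by blast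
  qed
  have iS: "is_tmap S T S T (\<lambda>m z. z)"
    unfolding is_tmap_def is_smap_def by simp
  have ge0: "\<forall>m. \<forall>x\<in>sx X m. (\<lambda>m z. z) m (\<eta> m x) = \<eta> m x" by simp
  have "g m z = g0 m z" using g0u[rule_format, OF conjI[OF gS ge]] z by blast
  moreover have "z = g0 m z" using g0u[rule_format, OF conjI[OF iS ge0]] z by simp
  moreover have "g m z \<in> Pc S T n m" using g1 z by blast
  ultimately show ?thesis by simp
qed


theorem mainTheorem11:
  fixes X :: "'a sset" and S :: "'c sset" and T :: "nat \<Rightarrow> 'c set"
    and \<eta> :: "nat \<Rightarrow> 'a \<Rightarrow> 'c" and n :: nat
  assumes "is_sset X"
    and "skeletal X n"
    and "is_St X S T \<eta>"
    and "infinite (UNIV :: 'c set)"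
    and "\<exists>h :: 'a \<Rightarrow> 'c. inj h"
  shows "coskeletal S (Suc n)"
proof -
  have tc: "tcomplex S T" using assms(3) unfolding is_St_def by (rule conjunct1)
  have ss: "is_sset S" using tc_sset[OF tc] .
  have thin: "\<And>m z. n < m \<Longrightarrow> z \<in> sx S m \<Longrightarrow> z \<in> T m"
  proof -
    fix m z assume "n < m" "z \<in> sx S m"
    then show "z \<in> T m" using all_P[OF assms(1,2,3), of z m] Pc_thin[of n m S T] by blast
  qed
  show ?thesis unfolding coskeletal_def
  proof (intro allI impI)
    fix m y assume a: "Suc n < Suc m \<and> face_family S m {0..Suc m} y"
    have nm: "n < m" using a by simp
    then obtain p where p: "m = Suc p" by (cases m) auto
    have ff: "face_family S m {0..Suc m} y" using a by blast
    have yS: "\<And>i. i \<le> Suc m \<Longrightarrow> y i \<in> sx S m" using ff unfolding face_family_def by auto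
    have ycomp: "\<And>i j. i < j \<Longrightarrow> j \<le> Suc m \<Longrightarrow> fc S p i (y j) = fc S p (j - 1) (y i)"
      using ff p unfolding face_family_def by auto
    let ?H = "horn_idx m 0"
    have ffH: "face_family S m ?H y" using ff unfolding face_family_def horn_idx_def by auto
    obtain x where x: "x \<in> T (Suc m)" "is_filler S m ?H y x"
      and u: "\<And>x'. x' \<in> T (Suc m) \<and> is_filler S m ?H y x' \<Longrightarrow> x' = x"
      using tc_horn[OF tc _ ffH] by blast
    have xs: "x \<in> sx S (Suc m)" using x unfolding is_filler_def by blast
    have fx: "\<And>i. 1 \<le> i \<Longrightarrow> i \<le> Suc m \<Longrightarrow> fc S m i x = y i"
      using x unfolding is_filler_def horn_idx_def by auto
    have d0: "fc S m 0 x = y 0"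
    proof -
      let ?H' = "horn_idx p 0"
      let ?z = "\<lambda>j. fc S p j (y 0)"
      have y0: "y 0 \<in> sx S (Suc p)" using yS p by auto
      have ffz: "face_family S p ?H' ?z"
        unfolding face_family_def
      proof (intro conjI ballI impI)
        fix i assume "i \<in> ?H'" then show "?z i \<in> sx S p"
          using sset_fc[OF ss _ y0] unfolding horn_idx_def by auto
      next
        fix i j assume "0 < p" "i \<in> ?H'" "j \<in> ?H'" "i < j"
        then obtain q where q: "p = Suc q" by (cases p) auto
        show "fc S (p - 1) i (?z j) = fc S (p - 1) (j - 1) (?z i)"
          using sset_ff[of S i j q "y 0"] ss \<open>i < j\<close> \<open>j \<in> ?H'\<close> y0 q unfolding horn_idx_def by auto
      qed
      have y0T: "y 0 \<in> T (Suc p)" using thin nm p y0 by auto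
      have y0f: "is_filler S p ?H' ?z (y 0)" unfolding is_filler_def using y0 by auto
      have hT: "\<forall>i\<in>?H. \<not> degenerate S m (y i) \<longrightarrow> y i \<in> T m"
        using thin nm yS unfolding horn_idx_def by auto
      have x0T: "fc S m 0 x \<in> T m" using tc_comp[OF tc _ ffH x(1,2) hT] by simp
      have x0f: "is_filler S p ?H' ?z (fc S m 0 x)"
        unfolding is_filler_def
      proof (intro conjI ballI)
        show "fc S m 0 x \<in> sx S (Suc p)" using sset_fc[OF ss _ xs] p by simp
      next
        fix j assume j: "j \<in> ?H'"
        then have j1: "1 \<le> j" "j \<le> Suc p" unfolding horn_idx_def by auto
        have "fc S p 0 (fc S (Suc p) (Suc j) x) = fc S p j (fc S (Suc p) 0 x)"
          using sset_ff[of S 0 "Suc j" p x] ss j1 xs p by simp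
        moreover have "fc S (Suc p) (Suc j) x = y (Suc j)" using fx j1 p by simp
        moreover have "fc S p 0 (y (Suc j)) = fc S p j (y 0)" using ycomp[of 0 "Suc j"] j1 p by simp
        ultimately show "fc S p j (fc S m 0 x) = ?z j" using p by simp
      qed
      show ?thesis using tc_horn[OF tc _ ffz] x0T x0f y0T y0f p by blast
    qed
    have xf: "is_filler S m {0..Suc m} y x"
      unfolding is_filler_def
    proof (intro conjI ballI)
      show "x \<in> sx S (Suc m)" by (rule xs)
    next
      fix i assume "i \<in> {0..Suc m}"
      then show "fc S m i x = y i" using d0 fx[of i] by (cases i) auto
    qed
    show "\<exists>!x. is_filler S m {0..Suc m} y x"
    proof (rule ex1I[of _ x])
      show "is_filler S m {0..Suc m} y x" by (rule xf)
    next
      fix x' assume x': "is_filler S m {0..Suc m} y x'"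
      have "x' \<in> T (Suc m)" using thin nm x' unfolding is_filler_def by auto
      moreover have "is_filler S m ?H y x'" using x' unfolding is_filler_def horn_idx_def by auto
      ultimately show "x' = x" using u by blast
    qed
  qed
qed

end
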